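(* Let $\varphi\in\Xi_p$ be such that $\lim_{x\to0}\frac{\sqrt x}{\varphi(x)}=0$. Then for every $n\in\mathbb{N}$ the map \[ \Upsilon_n:\big(C_0([0,1],G(\mathbb{R}^d)),d_\infty\big)\to\big(C_0([0,1],G(\mathbb{R}^d)),d_\varphi\big) \] is continuous.
   Context: Fix $d\geq2$, $p\in(2,3)$. $G(\mathbb{R}^d)$ is the set of $g=(g^1,g^2)\in\mathbb{R}^d\oplus(\mathbb{R}^d\otimes\mathbb{R}^d)$ whose symmetric part of $g^2$ is $\frac12g^1\otimes g^1$, with product $g\otimes h=(g^1+h^1,g^2+g^1\otimes h^1+h^2)$, identity $(0,0)=:\exp(0)$, inverse $(g^1,g^2)^{-1}=(-g^1,-g^2+g^1\otimes g^1)$; $\exp(a^1,a^2)=(a^1,a^2+\frac12a^1\otimes a^1)$ for antisymmetric $a^2$, $\exp(x):=\exp(x,0)$; dilation $\delta_\lambda\exp(a^1,a^2)=\exp(\lambda a^1,\lambda^2a^2)$; $\|g\|=\inf\{\sum_i|x^i|:x^i\in\mathbb{R}^d,\exp(x^1)\otimes\cdots\otimes\exp(x^k)=g\}$. $C_0([0,1],G(\mathbb{R}^d))$: continuous paths with $\mathbf{x}_0=\exp(0)$; $\mathbf{x}_{s,t}=\mathbf{x}_s^{-1}\otimes\mathbf{x}_t$; $d_\infty(\mathbf{x},\mathbf{y})=\sup_{0\leq s<t\leq1}\|\mathbf{x}_{s,t}^{-1}\otimes\mathbf{y}_{s,t}\|$ and $d_\varphi(\mathbf{x},\mathbf{y})=\sup_{0\leq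 s<t\leq1}\|\mathbf{x}_{s,t}^{-1}\otimes\mathbf{y}_{s,t}\|/\varphi(t-s)$. $\Xi_p$: $\varphi:[0,1]\to[0,\infty)$ with $\varphi(0)=0$ and $\varphi^p$ strictly increasing and convex. $\Upsilon_n(\mathbf{x})$ is the path with $\Upsilon_n(\mathbf{x})_{k/2^n}=\mathbf{x}_{k/2^n}$ for $k=0,\dots,2^n$ and $\Upsilon_n(\mathbf{x})_{k/2^n,\,k/2^n+t}=\delta_{2^nt}(\mathbf{x}_{k/2^n,(k+1)/2^n})$ for $t\in[0,2^{-n}]$, $k=0,\dots,2^n-1$. *)

theory Defs
  imports "HOL-Analysis.Analysis" "HOL-Library.Extended_Real"
begin

type_synonym 'd grp = "(real^'d) \<times> (real^'d^'d)"

definition outer :: "real^'d \<Rightarrow> real^'d \<Rightarrow> real^'d^'d" where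
  "outer x y = (\<chi> i j. x$i * y$j)"

definition Gset :: "'d::finite grp set" where
  "Gset = {g. (\<chi> i j. (snd g $i$j + snd g $j$i) / 2) = (1/2) *\<^sub>R outer (fst g) (fst g)}"

definition gmul :: "'d::finite grp \<Rightarrow> 'd grp \<Rightarrow> 'd grp" where
  "gmul g h = (fst g + fst h, snd g + outer (fst g) (fst h) + snd h)"

definition gone :: "'d::finite grp" where
  "gone = (0, 0)"

definition ginv :: "'d::finite grp \<Rightarrow> 'd grp" where
  "ginv g = (- fst g, - snd g + outer (fst g) (fst g))"

definition gexp2 :: "real^'d \<Rightarrow> real^'d^'d \<Rightarrow> 'd::finite grp" where
  "gexp2 a1 a2 = (a1, a2 + (1/2) *\<^sub>R outer a1 a1)"

definition gexp :: "real^'d \<Rightarrow> 'd::finite grp" where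
  "gexp x = gexp2 x 0"

text \<open>Dilation: delta_lambda exp(a1,a2) = exp(lambda a1, lambda^2 a2); on g = exp(a1,a2) this
  is (lambda g1, lambda^2 g2).\<close>
definition dil :: "real \<Rightarrow> 'd::finite grp \<Rightarrow> 'd grp" where
  "dil r g = (r *\<^sub>R fst g, r\<^sup>2 *\<^sub>R snd g)"

definition ccnorm :: "'d::finite grp \<Rightarrow> real" where
  "ccnorm g = Inf {sum_list (map norm xs) | xs.
                    foldr (\<lambda>x acc. gmul (gexp x) acc) xs gone = g}"

definition C0paths :: "(real \<Rightarrow> 'd::finite grp) set" where
  "C0paths = {x. continuous_on {0..1} x \<and> (\<forall>t\<in>{0..1}. x t \<in> Gset) \<and> x 0 = gone}"

definition incr :: "(real \<Rightarrow> 'd::finite grp) \<Rightarrow> real \<Rightarrow> real \<Rightarrow> 'd grp" where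
  "incr x s t = gmul (ginv (x s)) (x t)"

definition d_inf :: "(real \<Rightarrow> 'd::finite grp) \<Rightarrow> (real \<Rightarrow> 'd grp) \<Rightarrow> ereal" where
  "d_inf x y = (SUP st \<in> {(s,t). 0 \<le> s \<and> s < t \<and> t \<le> 1}.
      ereal (ccnorm (gmul (ginv (incr x (fst st) (snd st))) (incr y (fst st) (snd st)))))"

definition d_phi :: "(real \<Rightarrow> real) \<Rightarrow> (real \<Rightarrow> 'd::finite grp) \<Rightarrow> (real \<Rightarrow> 'd grp) \<Rightarrow> ereal" where
  "d_phi \<phi> x y = (SUP st \<in> {(s,t). 0 \<le> s \<and> s < t \<and> t \<le> 1}.
      ereal (ccnorm (gmul (ginv (incr x (fst st) (snd st))) (incr y (fst st) (snd st)))
             / \<phi> (snd st - fst st)))"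

definition Xi :: "real \<Rightarrow> (real \<Rightarrow> real) set" where
  "Xi p = {\<phi>. (\<forall>x\<in>{0..1}. \<phi> x \<ge> 0) \<and> \<phi> 0 = 0 \<and>
              strict_mono_on {0..1} (\<lambda>x. \<phi> x powr p) \<and>
              convex_on {0..1} (\<lambda>x. \<phi> x powr p)}"

definition Ups :: "nat \<Rightarrow> (real \<Rightarrow> 'd::finite grp) \<Rightarrow> real \<Rightarrow> 'd grp" where
  "Ups n x t = (if 1 \<le> t then x 1 else
     (let k = real (nat \<lfloor>2^n * t\<rfloor>) in
       gmul (x (k / 2^n)) (dil (2^n * t - k) (incr x (k / 2^n) ((k + 1) / 2^n)))))"

end

theory Submission
  imports Defs
begin


lemma gmul_simps[simp]: "fst (gmul g h) = fst g + fst h" "snd (gmul g h) = snd g + outer (fst g) (fst h) + snd h"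
  by (simp_all add: gmul_def)
lemma ginv_simps[simp]: "fst (ginv g) = - fst g" "snd (ginv g) = - snd g + outer (fst g) (fst g)"
  by (simp_all add: ginv_def)
lemma dil_simps[simp]: "fst (dil r g) = r *\<^sub>R fst g" "snd (dil r g) = r\<^sup>2 *\<^sub>R snd g"
  by (simp_all add: dil_def)
lemma gexp_simps[simp]: "fst (gexp x) = x" "snd (gexp x) = (1/2) *\<^sub>R outer x x"
  by (simp_all add: gexp_def gexp2_def)
lemma outer_comp[simp]: "outer x y $ i $ j = x$i * y$j"
  by (simp add: outer_def)
lemma gone_simps[simp]: "fst gone = 0" "snd gone = 0" by (simp_all add: gone_def)

lemma grp_eq: "(g::'d::finite grp) = h \<longleftrightarrow> (\<forall>i. fst g $ i = fst h $ i) \<and> (\<forall>i j. snd g $ i $ j = snd h $ i $ j)"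
  by (metis prod_eq_iff vec_eq_iff)

lemma gmul_assoc: "gmul (gmul a b) c = gmul a (gmul (b::'d::finite grp) c)"
  by (simp add: grp_eq algebra_simps)

lemma gmul_gone_left[simp]: "gmul gone g = g" by (simp add: grp_eq)
lemma gmul_gone_right[simp]: "gmul g gone = g" by (simp add: grp_eq)
lemma gmul_ginv_cancel: "gmul g (gmul (ginv g) h) = h" by (simp add: grp_eq algebra_simps)
lemma ginv_gone[simp]: "ginv gone = gone" by (simp add: grp_eq)
lemma dil_one[simp]: "dil 1 g = g" by (simp add: dil_def)
lemma dil_zero[simp]: "dil 0 g = gone" by (simp add: dil_def gone_def)

lemma Gset_iff: "g \<in> Gset \<longleftrightarrow> (\<forall>i j. snd g $ i $ j + snd g $ j $ i = fst g $ i * fst g $ j)"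
proof -
  have e: "\<And>a b c::real. (a+b)/2 = 1/2*c \<longleftrightarrow> a+b = c" by auto
  show ?thesis unfolding Gset_def vec_eq_iff by simp (smt (verit))
qed

lemma Gset_gmul: "g \<in> Gset \<Longrightarrow> h \<in> Gset \<Longrightarrow> gmul g h \<in> Gset"
  unfolding Gset_iff by (simp add: algebra_simps)
lemma Gset_ginv: "g \<in> Gset \<Longrightarrow> ginv g \<in> Gset"
  unfolding Gset_iff by (simp add: algebra_simps)
lemma Gset_dil: "g \<in> Gset \<Longrightarrow> dil r g \<in> Gset"
  unfolding Gset_iff by (simp add: algebra_simps power2_eq_square) (metis distrib_left)
lemma Gset_gone: "gone \<in> Gset" unfolding Gset_iff by simp

definition prodw :: "(real^'d) list \<Rightarrow> 'd::finite grp" where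
  "prodw xs = foldr (\<lambda>x acc. gmul (gexp x) acc) xs gone"

lemma prodw_Nil[simp]: "prodw [] = gone" by (simp add: prodw_def)
lemma prodw_Cons[simp]: "prodw (x#xs) = gmul (gexp x) (prodw xs)" by (simp add: prodw_def)
lemma prodw_append: "prodw (xs@ys) = gmul (prodw xs) (prodw ys)"
  by (induction xs) (simp_all add: gmul_assoc)

lemma prodw_comm: "prodw [u,v,-u,-v] = (0, outer u v - outer v u)"
  by (simp add: grp_eq algebra_simps)

lemma ccnorm_alt: "ccnorm g = Inf {sum_list (map norm xs) | xs. prodw xs = g}"
  unfolding ccnorm_def prodw_def by simp

lemma sl_nonneg: "0 \<le> sum_list (map norm xs)" by (induction xs) auto

lemma outer_zero[simp]: "outer 0 x = 0" "outer x 0 = 0" by (simp_all add: vec_eq_iff)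

lemma ccnorm_le: "prodw xs = g \<Longrightarrow> ccnorm g \<le> sum_list (map norm xs)"
  unfolding ccnorm_alt
  by (rule cInf_lower) (auto intro!: bdd_belowI[where m=0] sl_nonneg)

lemma word_lower: "norm (fst (prodw xs)) \<le> sum_list (map norm xs) \<and>
   (\<forall>i j. \<bar>snd (prodw xs) $ i $ j\<bar> \<le> (sum_list (map norm xs))\<^sup>2)"
proof (induction xs)
  case Nil
  then show ?case by simp
next
  case (Cons x xs)
  define L where "L = sum_list (map norm xs)"
  have L0: "0 \<le> L" unfolding L_def by (rule sl_nonneg)
  have h1: "norm (fst (prodw xs)) \<le> L" and h2: "\<And>i j. \<bar>snd (prodw xs) $ i $ j\<bar> \<le> L\<^sup>2"
    using Cons unfolding L_def by auto
  have "norm (fst (prodw (x#xs))) \<le> norm x + L"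
    using h1 norm_triangle_ineq[of x "fst (prodw xs)"] by simp
  moreover have "\<bar>snd (prodw (x#xs)) $ i $ j\<bar> \<le> (norm x + L)\<^sup>2" for i j
  proof -
    have a: "\<bar>x$i\<bar> \<le> norm x" "\<bar>x$j\<bar> \<le> norm x" "\<bar>fst (prodw xs) $ j\<bar> \<le> L"
      using component_le_norm_cart h1 order_trans by blast+
    have "\<bar>snd (prodw (x#xs)) $ i $ j\<bar> = \<bar>x$i*x$j/2 + x$i * fst (prodw xs) $ j + snd (prodw xs) $ i $ j\<bar>"
      by simp
    also have "\<dots> \<le> \<bar>x$i*x$j/2\<bar> + \<bar>x$i * fst (prodw xs) $ j\<bar> + \<bar>snd (prodw xs) $ i $ j\<bar>"
      by (smt (verit))
    also have "\<dots> \<le> \<bar>x$i\<bar>*\<bar>x$j\<bar>/2 + \<bar>x$i\<bar> * \<bar>fst (prodw xs) $ j\<bar> + L\<^sup>2"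
      using h2[of i j] by (simp add: abs_mult)
    also have "\<dots> \<le> norm x * norm x / 2 + norm x * L + L\<^sup>2"
      using a by (intro add_mono mult_mono divide_right_mono) auto
    also have "\<dots> \<le> (norm x + L)\<^sup>2" using L0 by (simp add: power2_eq_square algebra_simps)
    finally show ?thesis .
  qed
  ultimately show ?case unfolding L_def by simp
qed


lemma sqrt_sgn_mult: "(sgn c * sqrt \<bar>c\<bar>) * sqrt \<bar>c\<bar> = (c::real)"
  by (simp add: mult.assoc sgn_mult_abs)

lemma central_word:
  fixes c :: "'d::finite \<times> 'd \<Rightarrow> real"
  assumes "finite S"
  shows "\<exists>xs. prodw xs = (0, \<Sum>p\<in>S. c p *\<^sub>R (outer (axis (fst p) 1) (axis (snd p) 1) - outer (axis (snd p) 1) (axis (fst p) 1)))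
     \<and> sum_list (map norm xs) \<le> (\<Sum>p\<in>S. 4 * sqrt \<bar>c p\<bar>)"
  using assms
proof (induction S rule: finite_induct)
  case empty
  then show ?case by (intro exI[of _ "[]"]) (simp add: gone_def)
next
  case (insert p S)
  then obtain xs where xs: "prodw xs = (0, \<Sum>p\<in>S. c p *\<^sub>R (outer (axis (fst p) 1) (axis (snd p) 1) - outer (axis (snd p) 1) (axis (fst p) 1)))"
     "sum_list (map norm xs) \<le> (\<Sum>p\<in>S. 4 * sqrt \<bar>c p\<bar>)" by blast
  define a where "a = sgn (c p) * sqrt \<bar>c p\<bar>"
  define b where "b = sqrt \<bar>c p\<bar>"
  define u where "u = a *\<^sub>R (axis (fst p) (1::real) :: real^'d)"
  define v where "v = b *\<^sub>R (axis (snd p) (1::real) :: real^'d)"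
  have ab: "a * b = c p" unfolding a_def b_def by (rule sqrt_sgn_mult)
  have uv: "outer u v - outer v u = c p *\<^sub>R (outer (axis (fst p) 1) (axis (snd p) 1) - outer (axis (snd p) 1) (axis (fst p) 1))"
    unfolding u_def v_def by (simp add: vec_eq_iff algebra_simps ab[symmetric])
  have nu: "norm u = sqrt \<bar>c p\<bar>" "norm v = sqrt \<bar>c p\<bar>"
    unfolding u_def v_def a_def b_def by (auto simp: abs_mult sgn_if)
  show ?case
  proof (intro exI[of _ "[u,v,-u,-v] @ xs"] conjI)
    show "prodw ([u,v,-u,-v] @ xs) = (0, \<Sum>p\<in>insert p S. c p *\<^sub>R (outer (axis (fst p) 1) (axis (snd p) 1) - outer (axis (snd p) 1) (axis (fst p) 1)))"
      using insert(1,2) by (simp only: prodw_append prodw_comm xs(1)) (simp add: gmul_def uv)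
    show "sum_list (map norm ([u,v,-u,-v] @ xs)) \<le> (\<Sum>p\<in>insert p S. 4 * sqrt \<bar>c p\<bar>)"
      using insert(1,2) xs(2) nu by simp
  qed
qed

lemma antisym_decomp:
  fixes A :: "real^'d::finite^'d"
  assumes "\<And>i j. A$i$j + A$j$i = 0"
  shows "A = (\<Sum>p\<in>UNIV. (A $ fst p $ snd p / 2) *\<^sub>R (outer (axis (fst p) 1) (axis (snd p) 1) - outer (axis (snd p) 1) (axis (fst p) 1)))"
proof -
  have "(\<Sum>p\<in>UNIV. (A $ fst p $ snd p / 2) *\<^sub>R (outer (axis (fst p) 1) (axis (snd p) 1) - outer (axis (snd p) 1) (axis (fst p) (1::real)))) $ k $ l = A $ k $ l" for k l
  proof -
    have sm: "((A $ fst p $ snd p / 2) *\<^sub>R (outer (axis (fst p) 1) (axis (snd p) 1) - outer (axis (snd p) 1) (axis (fst p) (1::real)))) $ k $ l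
       = (if p = (k,l) then A$k$l/2 else 0) - (if p = (l,k) then A$l$k/2 else 0)" for p :: "'d\<times>'d"
    proof -
      obtain i j where p: "p = (i,j)" by (cases p)
      have "((A $ fst p $ snd p / 2) *\<^sub>R (outer (axis (fst p) 1) (axis (snd p) 1) - outer (axis (snd p) 1) (axis (fst p) (1::real)))) $ k $ l
        = A$i$j/2 * ((if k = i then 1 else 0) * (if l = j then 1 else 0) - (if k = j then 1 else 0) * (if l = i then 1 else 0))"
        unfolding p by (simp add: axis_def)
      also have "\<dots> = (if p = (k,l) then A$k$l/2 else 0) - (if p = (l,k) then A$l$k/2 else 0)"
        unfolding p by (cases "i=k"; cases "j=l"; cases "j=k"; cases "i=l") simp_all
      finally show ?thesis .
    qed
    have "(\<Sum>p\<in>UNIV. (A $ fst p $ snd p / 2) *\<^sub>R (outer (axis (fst p) 1) (axis (snd p) 1) - outer (axis (snd p) 1) (axis (fst p) (1::real)))) $ k $ l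
       = (\<Sum>p\<in>UNIV. (if p = (k,l) then A$k$l/2 else 0) - (if p = (l,k) then A$l$k/2 else 0))"
      by (simp only: sum_component sm)
    also have "\<dots> = A$k$l/2 - A$l$k/2" by (simp add: sum_subtractf)
    also have "\<dots> = A$k$l" using assms[of k l] by simp
    finally show ?thesis .
  qed
  then show ?thesis by (simp add: vec_eq_iff)
qed

lemma chow_word:
  assumes "g \<in> Gset"
  shows "\<exists>xs. prodw xs = (g::'d::finite grp) \<and> sum_list (map norm xs) \<le>
     norm (fst g) + (\<Sum>p\<in>UNIV. 4 * sqrt \<bar>(snd g $ fst p $ snd p - fst g $ fst p * fst g $ snd p / 2) / 2\<bar>)"
proof -
  define A where "A = snd g - (1/2) *\<^sub>R outer (fst g) (fst g)"
  have anti: "A$i$j + A$j$i = 0" for i j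
    using assms unfolding Gset_iff A_def by (simp add: algebra_simps)
  obtain xs where xs: "prodw xs = (0, \<Sum>p\<in>UNIV. (A $ fst p $ snd p / 2) *\<^sub>R (outer (axis (fst p) 1) (axis (snd p) 1) - outer (axis (snd p) 1) (axis (fst p) 1)))"
     "sum_list (map norm xs) \<le> (\<Sum>p\<in>UNIV. 4 * sqrt \<bar>A $ fst p $ snd p / 2\<bar>)"
    using central_word[of "UNIV::('d\<times>'d) set" "\<lambda>p. A $ fst p $ snd p / 2"] by auto
  have fx: "fst (prodw xs) = 0" using xs(1) by simp
  have sx: "snd (prodw xs) = A" by (simp add: xs(1)) (rule antisym_decomp[OF anti, symmetric])
  have "prodw (fst g # xs) = g"
    by (simp add: prod_eq_iff fx sx A_def)
  moreover have "sum_list (map norm (fst g # xs)) \<le> norm (fst g) + (\<Sum>p\<in>UNIV. 4 * sqrt \<bar>(snd g $ fst p $ snd p - fst g $ fst p * fst g $ snd p / 2) / 2\<bar>)"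
    using xs(2) by (simp add: A_def)
  ultimately show ?thesis by blast
qed



lemma ccnorm_upper:
  assumes "g \<in> Gset"
  shows "ccnorm g \<le> norm (fst g) + (\<Sum>p\<in>UNIV. 4 * sqrt \<bar>(snd g $ fst p $ snd p - fst g $ fst p * fst g $ snd p / 2) / 2\<bar>)"
  using chow_word[OF assms] ccnorm_le by (meson order_trans)

lemma ccnorm_small:
  assumes "g \<in> Gset" "ccnorm g < d"
  shows "(\<forall>i. \<bar>fst g $ i\<bar> < d) \<and> (\<forall>i j. \<bar>snd g $ i $ j\<bar> \<le> d\<^sup>2)"
proof -
  have ne: "{sum_list (map norm xs) | xs. prodw xs = g} \<noteq> {}"
    using chow_word[OF assms(1)] by blast
  obtain L where "L \<in> {sum_list (map norm xs) | xs. prodw xs = g}" "L < d"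
    using cInf_lessD[OF ne, of d] assms(2) unfolding ccnorm_alt by blast
  then obtain xs where xs: "prodw xs = g" "sum_list (map norm xs) < d" by blast
  have L0: "0 \<le> sum_list (map norm xs)" by (rule sl_nonneg)
  have "\<bar>fst g $ i\<bar> < d" for i
    using word_lower[of xs] xs component_le_norm_cart[of "fst g" i] by auto
  moreover have "\<bar>snd g $ i $ j\<bar> \<le> d\<^sup>2" for i j
  proof -
    have "\<bar>snd g $ i $ j\<bar> \<le> (sum_list (map norm xs))\<^sup>2" using word_lower[of xs] xs by auto
    also have "\<dots> \<le> d\<^sup>2" using L0 xs(2) by (intro power_mono) auto
    finally show ?thesis .
  qed
  ultimately show ?thesis by blast
qed

lemma pw_lip:
  fixes f :: "real \<Rightarrow> real" and m :: nat and A B C :: "nat \<Rightarrow> real"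
  assumes m: "0 < m"
  and piece: "\<And>k t. k < m \<Longrightarrow> real k / real m \<le> t \<Longrightarrow> t \<le> (real k + 1)/real m \<Longrightarrow> f t = A k + (real m * t - real k)*B k + (real m * t - real k)^2 * C k"
  and bnd: "\<And>k. k < m \<Longrightarrow> \<bar>B k\<bar> + 2*\<bar>C k\<bar> \<le> L"
  and st: "s \<in> {0..1}" "t \<in> {0..1}"
  shows "\<bar>f t - f s\<bar> \<le> real m * L * \<bar>t - s\<bar>"
proof -
  have mpos: "(0::real) < m" using m by simp
  have L0: "0 \<le> L" using bnd[OF m] by linarith
  have one: "\<bar>f t - f s\<bar> \<le> m * L * \<bar>t - s\<bar>"
    if k: "k < m" and s: "real k / m \<le> s" "s \<le> (real k + 1)/m" and t: "real k / m \<le> t" "t \<le> (real k + 1)/m" for k s t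
  proof -
    define u where "u = real m * s - real k"
    define v where "v = real m * t - real k"
    have u: "0 \<le> u" "u \<le> 1" using s mpos unfolding u_def by (auto simp: field_simps)
    have v: "0 \<le> v" "v \<le> 1" using t mpos unfolding v_def by (auto simp: field_simps)
    have "f t - f s = (v - u) * (B k + (u + v) * C k)"
      using piece[OF k s] piece[OF k t] unfolding u_def[symmetric] v_def[symmetric]
      by (simp add: power2_eq_square algebra_simps)
    then have "\<bar>f t - f s\<bar> = \<bar>v - u\<bar> * \<bar>B k + (u + v) * C k\<bar>" by (simp add: abs_mult)
    also have "\<dots> \<le> \<bar>v - u\<bar> * (\<bar>B k\<bar> + 2*\<bar>C k\<bar>)"
    proof (rule mult_left_mono)
      have "\<bar>(u + v) * C k\<bar> \<le> 2 * \<bar>C k\<bar>" using u v by (simp add: abs_mult mult_right_mono)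
      then show "\<bar>B k + (u + v) * C k\<bar> \<le> \<bar>B k\<bar> + 2*\<bar>C k\<bar>" by linarith
    qed simp
    also have "\<dots> \<le> \<bar>v - u\<bar> * L" using bnd[OF k] by (simp add: mult_left_mono)
    also have "\<bar>v - u\<bar> = real m * \<bar>t - s\<bar>"
    proof -
      have "v - u = real m * (t - s)" unfolding u_def v_def by (simp add: algebra_simps)
      then show ?thesis by (simp add: abs_mult)
    qed
    finally show ?thesis by (simp add: mult_ac)
  qed
  have ind: "\<forall>s t. 0 \<le> s \<longrightarrow> s \<le> t \<longrightarrow> t \<le> real j / m \<longrightarrow> \<bar>f t - f s\<bar> \<le> m * L * \<bar>t - s\<bar>" if "j \<le> m" for j
    using that
  proof (induction j)
    case 0
    show ?case
    proof (intro allI impI)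
      fix s t :: real assume "0 \<le> s" "s \<le> t" "t \<le> real 0 / real m"
      then have "t = s" by simp
      then show "\<bar>f t - f s\<bar> \<le> real m * L * \<bar>t - s\<bar>" by simp
    qed
  next
    case (Suc j)
    have jm: "j < m" using Suc by simp
    show ?case
    proof (intro allI impI)
      fix s t :: real assume a: "0 \<le> s" "s \<le> t" "t \<le> real (Suc j) / m"
      show "\<bar>f t - f s\<bar> \<le> m * L * \<bar>t - s\<bar>"
      proof (cases "t \<le> real j / m")
        case True then show ?thesis using Suc a by auto
      next
        case False
        note F = False
        have t1: "t \<le> (real j + 1) / real m" using a by (simp add: add.commute)
        have t0: "real j / real m \<le> t" using F by simp
        show ?thesis
        proof (cases "real j / m \<le> s")
          case True
          have s1: "s \<le> (real j + 1) / real m" using a t1 by linarith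
          show ?thesis using one[OF jm True s1 t0 t1] .
        next
          case False
          have "\<bar>f t - f s\<bar> \<le> \<bar>f t - f (real j / m)\<bar> + \<bar>f (real j / m) - f s\<bar>" by linarith
          also have "\<bar>f (real j / m) - f s\<bar> \<le> m * L * \<bar>real j / m - s\<bar>" using Suc a False by auto
          also have "\<bar>f t - f (real j / m)\<bar> \<le> m * L * \<bar>t - real j / m\<bar>"
            using one[OF jm _ _ t0 t1] mpos by (simp add: divide_right_mono)
          finally show ?thesis using False F by (simp add: algebra_simps abs_if split: if_splits)
        qed
      qed
    qed
  qed
  have main: "\<bar>f t - f s\<bar> \<le> m * L * \<bar>t - s\<bar>" if "0 \<le> s" "s \<le> t" "t \<le> 1" for s t
    using ind[of m] that mpos by auto
  show ?thesis
  proof (cases "s \<le> t")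
    case True then show ?thesis using main st by auto
  next
    case False then show ?thesis using main[of t s] st by (auto simp: abs_minus_commute)
  qed
qed



lemma incr_cancel: "gmul (x s) (incr x s t) = x t"
  unfolding incr_def by (rule gmul_ginv_cancel)

lemma Ups_piece:
  fixes x :: "real \<Rightarrow> 'd::finite grp"
  assumes k: "k < (2::nat)^n" and t: "real k / 2^n \<le> t" "t \<le> (real k + 1)/2^n"
  shows "Ups n x t = gmul (x (real k / 2^n)) (dil (2^n * t - real k) (incr x (real k / 2^n) ((real k + 1)/2^n)))"
proof -
  define N :: real where "N = 2^n"
  have N0: "0 < N" unfolding N_def by simp
  have kN: "real k + 1 \<le> N" using k unfolding N_def
    by (metis Suc_leI of_nat_Suc of_nat_le_iff of_nat_numeral of_nat_power add.commute)
  have tN: "real k \<le> N * t" "N * t \<le> real k + 1" using t N0 unfolding N_def[symmetric]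
    by (auto simp: field_simps)
  show ?thesis
  proof (cases "1 \<le> t")
    case True
    have "N * t \<le> N * 1" using tN(2) kN by linarith
    then have "t \<le> 1" using N0 by (simp only: mult_le_cancel_left_pos)
    then have t1: "t = 1" using True by simp
    have "N \<le> real k + 1" using tN(2) t1 by simp
    then have kk: "real k + 1 = N" using kN by simp
    have "Ups n x t = x 1" using True by (simp add: Ups_def)
    moreover have "(real k + 1) / N = 1" using kk N0 by simp
    moreover have "N * t - real k = 1" using kk t1 by simp
    ultimately show ?thesis unfolding N_def[symmetric] by (simp add: incr_cancel)
  next
    case False
    show ?thesis
    proof (cases "N * t < real k + 1")
      case True
      have "\<lfloor>N * t\<rfloor> = int k" using tN True by (simp add: floor_eq_iff)
      then show ?thesis using False unfolding Ups_def N_def[symmetric] by (simp add: Let_def)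
    next
      case c2: False
      then have Nt: "N * t = real k + 1" using tN by simp
      then have "\<lfloor>N * t\<rfloor> = int (k + 1)" by simp
      then have "Ups n x t = gmul (x ((real k + 1) / N)) (dil 0 (incr x ((real k + 1) / N) ((real k + 2) / N)))"
        using False Nt unfolding Ups_def N_def[symmetric] by (simp add: Let_def add.commute)
      also have "\<dots> = x ((real k + 1) / N)" by simp
      also have "\<dots> = gmul (x (real k / N)) (dil (N * t - real k) (incr x (real k / N) ((real k + 1) / N)))"
        using Nt by (simp add: incr_cancel)
      finally show ?thesis unfolding N_def .
    qed
  qed
qed



lemma phi_pos:
  assumes "\<phi> \<in> Xi p" "0 < p" "0 < h" "h \<le> 1"
  shows "0 < \<phi> h"
proof -
  have sm: "strict_mono_on {0..1} (\<lambda>x. \<phi> x powr p)" and z: "\<phi> 0 = 0" and nn: "\<phi> h \<ge> 0"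
    using assms unfolding Xi_def by auto
  have "\<phi> 0 powr p < \<phi> h powr p" using strict_mono_onD[OF sm, of 0 h] assms by auto
  then have "\<phi> h \<noteq> 0" using z by auto
  then show ?thesis using nn by simp
qed

lemma phi_mono:
  assumes "\<phi> \<in> Xi p" "0 < p" "0 \<le> a" "a < b" "b \<le> 1"
  shows "\<phi> a \<le> \<phi> b"
proof (rule ccontr)
  assume "\<not> \<phi> a \<le> \<phi> b"
  then have "\<phi> b \<le> \<phi> a" by simp
  moreover have "\<phi> b \<ge> 0" using assms unfolding Xi_def by auto
  ultimately have "\<phi> b powr p \<le> \<phi> a powr p" using assms(2) by (intro powr_mono2) auto
  moreover have "\<phi> a powr p < \<phi> b powr p"
    using assms strict_mono_onD[of "{0..1}" "\<lambda>x. \<phi> x powr p" a b] unfolding Xi_def by auto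
  ultimately show False by simp
qed

lemma phi_lower:
  assumes "\<phi> \<in> Xi p" "0 < p" "((\<lambda>x. sqrt x / \<phi> x) \<longlongrightarrow> 0) (at_right 0)"
  shows "\<exists>c>0. \<forall>h. 0 < h \<longrightarrow> h \<le> 1 \<longrightarrow> c * sqrt h \<le> \<phi> h"
proof -
  have "eventually (\<lambda>x. dist (sqrt x / \<phi> x) 0 < 1) (at_right (0::real))"
    using assms(3) tendstoD by fastforce
  then obtain h0 where h0: "h0 > 0" "\<And>y. 0 < y \<Longrightarrow> y < h0 \<Longrightarrow> \<bar>sqrt y / \<phi> y\<bar> < 1"
    unfolding eventually_at_right_field by auto
  define h1 where "h1 = min (h0/2) 1"
  have h1: "0 < h1" "h1 < h0" "h1 \<le> 1" unfolding h1_def using h0 by auto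
  define c where "c = min 1 (\<phi> h1)"
  have c0: "0 < c" unfolding c_def using phi_pos[OF assms(1,2) h1(1,3)] by simp
  have "c * sqrt h \<le> \<phi> h" if h: "0 < h" "h \<le> 1" for h
  proof (cases "h < h0")
    case True
    have ph: "0 < \<phi> h" using phi_pos[OF assms(1,2) h] .
    have "sqrt h / \<phi> h < 1" using h0(2)[OF h(1) True] ph h(1) by (simp add: abs_of_pos)
    then have "sqrt h < \<phi> h" using ph by (simp add: divide_less_eq)
    moreover have "c * sqrt h \<le> 1 * sqrt h" using h by (intro mult_right_mono) (auto simp: c_def)
    ultimately show ?thesis by simp
  next
    case False
    have "\<phi> h1 \<le> \<phi> h" using phi_mono[OF assms(1,2), of h1 h] h1 h False by auto
    moreover have "c * sqrt h \<le> c" using c0 h by (simp add: mult_le_cancel_left1)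
    moreover have "c \<le> \<phi> h1" unfolding c_def by simp
    ultimately show ?thesis by simp
  qed
  then show ?thesis using c0 by blast
qed

lemma exists_piece:
  assumes "0 \<le> t" "t \<le> 1"
  shows "\<exists>k < (2::nat)^n. real k / 2^n \<le> t \<and> t \<le> (real k + 1) / 2^n"
proof (cases "t < 1")
  case True
  define N :: real where "N = 2^n"
  have N0: "0 < N" unfolding N_def by simp
  define k where "k = nat \<lfloor>N * t\<rfloor>"
  have nt: "0 \<le> N * t" using N0 assms by simp
  have k1: "real k \<le> N * t" unfolding k_def using nt by linarith
  have k2: "N * t < real k + 1" unfolding k_def using nt by linarith
  have "N * t < N" using True N0 by simp
  then have "real k < N" using k1 by simp
  then have "k < 2^n" unfolding N_def by (metis of_nat_less_iff of_nat_numeral of_nat_power)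
  moreover have "real k / 2^n \<le> t" using k1 N0 unfolding N_def by (simp add: field_simps)
  moreover have "t \<le> (real k + 1) / 2^n" using k2 N0 unfolding N_def by (simp add: field_simps)
  ultimately show ?thesis by blast
next
  case False
  then have t1: "t = 1" using assms by simp
  have "(0::nat) < 2^n" by simp
  then have "real (2^n - 1::nat) + 1 = 2^n" by (simp add: of_nat_diff)
  moreover have "2^n - 1 < (2::nat)^n" by simp
  moreover have "real (2^n - 1::nat) / 2^n \<le> (1::real)" by (simp add: of_nat_diff)
  ultimately show ?thesis using t1 by (metis divide_self_if order_refl power_not_zero zero_neq_numeral)
qed

lemma Ups_Gset:
  assumes "z \<in> C0paths" "0 \<le> t" "t \<le> 1"
  shows "Ups n z t \<in> Gset"
proof -
  obtain k where k: "k < (2::nat)^n" "real k / 2^n \<le> t" "t \<le> (real k + 1) / 2^n"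
    using exists_piece[OF assms(2,3)] by blast
  have kk: "real k + 1 \<le> 2^n" using k(1)
    by (metis Suc_leI of_nat_Suc of_nat_le_iff of_nat_numeral of_nat_power add.commute)
  have kk': "real k \<le> 2^n" using kk by linarith
  have a: "0 \<le> real k / 2^n" "real k / 2^n \<le> 1" "0 \<le> (real k + 1) / 2^n" "(real k + 1) / 2^n \<le> 1"
    using kk kk' by (simp_all only: divide_le_eq_1_pos zero_less_power zero_less_numeral) auto
  have G: "\<And>s. 0 \<le> s \<Longrightarrow> s \<le> 1 \<Longrightarrow> z s \<in> Gset" using assms(1) unfolding C0paths_def by auto
  show ?thesis unfolding Ups_piece[OF k] incr_def
    using a by (intro Gset_gmul Gset_dil Gset_ginv G) auto
qed

lemma Ups_coord:
  fixes z :: "real \<Rightarrow> 'd::finite grp"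
  assumes k: "k < (2::nat)^n" and t: "real k / 2^n \<le> t" "t \<le> (real k + 1)/2^n"
  shows "fst (Ups n z t) $ i = fst (z (real k / 2^n)) $ i + (2^n * t - real k) * (fst (z (real (Suc k) / 2^n)) $ i - fst (z (real k / 2^n)) $ i)"
    and "snd (Ups n z t) $ i $ j = snd (z (real k / 2^n)) $ i $ j
        + (2^n * t - real k) * (fst (z (real k / 2^n)) $ i * (fst (z (real (Suc k) / 2^n)) $ j - fst (z (real k / 2^n)) $ j))
        + (2^n * t - real k)^2 * (snd (z (real (Suc k) / 2^n)) $ i $ j - snd (z (real k / 2^n)) $ i $ j
            - fst (z (real k / 2^n)) $ i * (fst (z (real (Suc k) / 2^n)) $ j - fst (z (real k / 2^n)) $ j))"
  unfolding Ups_piece[OF k t] incr_def by (simp_all add: algebra_simps)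

lemma Z_coords:
  "fst (gmul (ginv (gmul (ginv (P s)) (P t))) (gmul (ginv (Q s)) (Q t))) $ i
     = (fst (Q t) $ i - fst (P t) $ i) - (fst (Q s) $ i - fst (P s) $ i)"
  "snd (gmul (ginv (gmul (ginv (P s)) (P t))) (gmul (ginv (Q s)) (Q t))) $ i $ j
     = (snd (Q t) $ i $ j - snd (P t) $ i $ j) - (snd (Q s) $ i $ j - snd (P s) $ i $ j)
       - ((fst (Q s) $ i - fst (P s) $ i) * (fst (Q t) $ j - fst (Q s) $ j)
          + fst (P s) $ i * ((fst (Q t) $ j - fst (P t) $ j) - (fst (Q s) $ j - fst (P s) $ j)))
       - (fst (P t) $ i - fst (P s) $ i) * ((fst (Q t) $ j - fst (P t) $ j) - (fst (Q s) $ j - fst (P s) $ j))"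
  by (simp_all add: algebra_simps)

lemma Z2_bound:
  fixes K e h dG Ds dq ps dp dD :: real
  assumes "\<bar>dG\<bar> \<le> K*e*h" "\<bar>Ds\<bar> \<le> K*e" "\<bar>dq\<bar> \<le> K*h" "\<bar>ps\<bar> \<le> K" "\<bar>dD\<bar> \<le> K*e*h" "\<bar>dp\<bar> \<le> K*h"
    "1 \<le> K" "0 \<le> e" "e \<le> 1" "0 \<le> h" "h \<le> 1"
  shows "\<bar>dG - (Ds * dq + ps * dD) - dp * dD\<bar> \<le> 4*K\<^sup>2*e*h"
proof -
  have K0: "0 \<le> K" using assms by simp
  define T where "T = K*(K*e*h)"
  have T0: "0 \<le> T" unfolding T_def using K0 assms by simp
  have "\<bar>Ds * dq\<bar> \<le> (K*e)*(K*h)" unfolding abs_mult using assms by (intro mult_mono) auto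
  then have b1: "\<bar>Ds * dq\<bar> \<le> T" unfolding T_def by (simp add: mult_ac)
  have b2: "\<bar>ps * dD\<bar> \<le> T" unfolding abs_mult T_def using assms K0 by (intro mult_mono) auto
  have "\<bar>dp * dD\<bar> \<le> (K*h)*(K*e*h)" unfolding abs_mult using assms K0 by (intro mult_mono) auto
  moreover have "(K*h)*(K*e*h) \<le> K*(K*e*h)"
    using assms K0 by (intro mult_right_mono) (auto simp: mult_le_cancel_left1)
  ultimately have b3: "\<bar>dp * dD\<bar> \<le> T" unfolding T_def by linarith
  have "K*e*h \<le> K*(K*e*h)"
    using assms K0 by (simp add: mult_le_cancel_right1)
  then have b4: "\<bar>dG\<bar> \<le> T" unfolding T_def using assms(1) by linarith
  have "\<bar>dG - (Ds * dq + ps * dD) - dp * dD\<bar> \<le> \<bar>dG\<bar> + \<bar>Ds * dq\<bar> + \<bar>ps * dD\<bar> + \<bar>dp * dD\<bar>"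
    by linarith
  also have "\<dots> \<le> 4 * T" using b1 b2 b3 b4 by linarith
  also have "4 * T = 4*K\<^sup>2*e*h" unfolding T_def by (simp add: power2_eq_square mult_ac)
  finally show ?thesis .
qed



lemma Ups_lip1:
  fixes z w :: "real \<Rightarrow> 'd::finite grp"
  assumes bnd: "\<And>k. k < (2::nat)^n \<Longrightarrow> \<bar>(fst (w (real (Suc k)/2^n)) $ i - fst (z (real (Suc k)/2^n)) $ i) - (fst (w (real k/2^n)) $ i - fst (z (real k/2^n)) $ i)\<bar> \<le> L"
  and st: "s \<in> {0..1}" "t \<in> {0..1}"
  shows "\<bar>(fst (Ups n w t) $ i - fst (Ups n z t) $ i) - (fst (Ups n w s) $ i - fst (Ups n z s) $ i)\<bar> \<le> 2^n * L * \<bar>t - s\<bar>"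
proof -
  have "\<bar>(\<lambda>t. fst (Ups n w t) $ i - fst (Ups n z t) $ i) t - (\<lambda>t. fst (Ups n w t) $ i - fst (Ups n z t) $ i) s\<bar> \<le> real (2^n) * L * \<bar>t - s\<bar>"
  proof (rule pw_lip[where A = "\<lambda>k. fst (w (real k/2^n)) $ i - fst (z (real k/2^n)) $ i"
        and B = "\<lambda>k. (fst (w (real (Suc k)/2^n)) $ i - fst (z (real (Suc k)/2^n)) $ i) - (fst (w (real k/2^n)) $ i - fst (z (real k/2^n)) $ i)"
        and C = "\<lambda>k. 0"])
    show "0 < (2::nat)^n" by simp
    show "\<bar>(fst (w (real (Suc k)/2^n)) $ i - fst (z (real (Suc k)/2^n)) $ i) - (fst (w (real k/2^n)) $ i - fst (z (real k/2^n)) $ i)\<bar> + 2 * \<bar>0::real\<bar> \<le> L"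
      if "k < 2^n" for k using bnd[OF that] by simp
    fix k t assume k: "k < (2::nat)^n" and t: "real k / real (2^n) \<le> t" "t \<le> (real k + 1) / real (2^n)"
    have t': "real k / 2^n \<le> t" "t \<le> (real k + 1) / 2^n" using t by simp_all
    show "fst (Ups n w t) $ i - fst (Ups n z t) $ i = (fst (w (real k/2^n)) $ i - fst (z (real k/2^n)) $ i)
       + (real (2^n) * t - real k) * ((fst (w (real (Suc k)/2^n)) $ i - fst (z (real (Suc k)/2^n)) $ i) - (fst (w (real k/2^n)) $ i - fst (z (real k/2^n)) $ i))
       + (real (2^n) * t - real k)^2 * 0"
      unfolding Ups_coord(1)[OF k t'] by (simp add: algebra_simps)
  qed (use st in auto)
  then show ?thesis by simp
qed

lemma Ups_lip2:
  fixes z w :: "real \<Rightarrow> 'd::finite grp" and n :: nat and i j :: 'd and L s t :: real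
  defines "Bc \<equiv> \<lambda>k. fst (w (real k/2^n)) $ i * (fst (w (real (Suc k)/2^n)) $ j - fst (w (real k/2^n)) $ j)
                  - fst (z (real k/2^n)) $ i * (fst (z (real (Suc k)/2^n)) $ j - fst (z (real k/2^n)) $ j)"
  defines "Ac \<equiv> \<lambda>k. snd (w (real k/2^n)) $ i $ j - snd (z (real k/2^n)) $ i $ j"
  assumes bnd: "\<And>k. k < (2::nat)^n \<Longrightarrow> \<bar>Bc k\<bar> + 2 * \<bar>Ac (Suc k) - Ac k - Bc k\<bar> \<le> L"
  and st: "s \<in> {0..1}" "t \<in> {0..1}"
  shows "\<bar>(snd (Ups n w t) $ i $ j - snd (Ups n z t) $ i $ j) - (snd (Ups n w s) $ i $ j - snd (Ups n z s) $ i $ j)\<bar> \<le> 2^n * L * \<bar>t - s\<bar>"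
proof -
  have "\<bar>(\<lambda>t. snd (Ups n w t) $ i $ j - snd (Ups n z t) $ i $ j) t - (\<lambda>t. snd (Ups n w t) $ i $ j - snd (Ups n z t) $ i $ j) s\<bar> \<le> real (2^n) * L * \<bar>t - s\<bar>"
  proof (rule pw_lip[where A = Ac and B = Bc and C = "\<lambda>k. Ac (Suc k) - Ac k - Bc k"])
    show "0 < (2::nat)^n" by simp
    show "\<bar>Bc k\<bar> + 2 * \<bar>Ac (Suc k) - Ac k - Bc k\<bar> \<le> L" if "k < 2^n" for k using bnd[OF that] by simp
    fix k t assume k: "k < (2::nat)^n" and t: "real k / real (2^n) \<le> t" "t \<le> (real k + 1) / real (2^n)"
    have t': "real k / 2^n \<le> t" "t \<le> (real k + 1) / 2^n" using t by simp_all
    show "snd (Ups n w t) $ i $ j - snd (Ups n z t) $ i $ j = Ac k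
       + (real (2^n) * t - real k) * Bc k + (real (2^n) * t - real k)^2 * (Ac (Suc k) - Ac k - Bc k)"
      unfolding Ups_coord(2)[OF k t'] Ac_def Bc_def by (simp add: algebra_simps)
  qed (use st in auto)
  then show ?thesis by simp
qed

lemma coef_bound:
  fixes M e xi xj xj' yi yj yj' X X' Y Y' :: real
  assumes "\<bar>xi\<bar> \<le> M" "\<bar>xj\<bar> \<le> M" "\<bar>xj'\<bar> \<le> M" "\<bar>yi - xi\<bar> \<le> e" "\<bar>yj - xj\<bar> \<le> e" "\<bar>yj' - xj'\<bar> \<le> e"
    "\<bar>Y - X\<bar> \<le> e" "\<bar>Y' - X'\<bar> \<le> e" "1 \<le> M" "0 \<le> e" "e \<le> 1"
  shows "\<bar>yi * (yj' - yj) - xi * (xj' - xj)\<bar> + 2 * \<bar>(Y' - X') - (Y - X) - (yi * (yj' - yj) - xi * (xj' - xj))\<bar> \<le> 22 * M * e"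
proof -
  have B: "yi * (yj' - yj) - xi * (xj' - xj) = (yi - xi) * (yj' - yj) + xi * ((yj' - xj') - (yj - xj))"
    by (simp add: algebra_simps)
  have "\<bar>yj' - yj\<bar> \<le> 4 * M" using assms by linarith
  then have b1: "\<bar>(yi - xi) * (yj' - yj)\<bar> \<le> e * (4 * M)" unfolding abs_mult using assms by (intro mult_mono) auto
  have "\<bar>(yj' - xj') - (yj - xj)\<bar> \<le> 2 * e" using assms by linarith
  then have b2: "\<bar>xi * ((yj' - xj') - (yj - xj))\<bar> \<le> M * (2 * e)" unfolding abs_mult using assms by (intro mult_mono) auto
  have ee: "e * (4 * M) + M * (2 * e) = 6 * (M * e)" by (simp add: algebra_simps)
  have bB: "\<bar>yi * (yj' - yj) - xi * (xj' - xj)\<bar> \<le> 6 * (M * e)" unfolding B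
    using b1 b2 ee abs_triangle_ineq[of "(yi - xi) * (yj' - yj)" "xi * ((yj' - xj') - (yj - xj))"] by linarith
  have "e \<le> M * e" using assms by (simp add: mult_le_cancel_right1)
  then have gen: "\<bar>BB\<bar> + 2 * \<bar>(Y' - X') - (Y - X) - BB\<bar> \<le> 22 * (M * e)" if "\<bar>BB\<bar> \<le> 6 * (M * e)" for BB
    using that assms(7,8) by (smt (verit))
  have "\<bar>yi * (yj' - yj) - xi * (xj' - xj)\<bar> + 2 * \<bar>(Y' - X') - (Y - X) - (yi * (yj' - yj) - xi * (xj' - xj))\<bar> \<le> 22 * (M * e)"
    by (rule gen[OF bB])
  then show ?thesis by (simp add: mult.assoc)
qed

lemma Ups_at0: "z 0 = gone \<Longrightarrow> Ups n z 0 = gone"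
  by (simp add: Ups_def Let_def)

lemma Ups_const: "Ups n (\<lambda>_. gone) t = gone"
  by (simp add: Ups_def Let_def incr_def dil_def gone_def gmul_def ginv_def)

lemma sqrt_ge_self: "0 \<le> x \<Longrightarrow> x \<le> 1 \<Longrightarrow> x \<le> sqrt (x::real)"
  by (metis real_sqrt_le_1_iff mult_left_le real_sqrt_ge_zero real_sqrt_mult_self abs_of_nonneg)

lemma ccnorm_final:
  fixes Z :: "'d::finite grp"
  assumes Z: "Z \<in> Gset" and z1: "\<And>i. \<bar>fst Z $ i\<bar> \<le> K*e*h" and z2: "\<And>i j. \<bar>snd Z $ i $ j\<bar> \<le> 4*K\<^sup>2*e*h"
    and K: "1 \<le> K" and e: "0 \<le> e" "e \<le> 1" and h: "0 \<le> h" "h \<le> 1"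
  shows "ccnorm Z \<le> 9 * (real CARD('d))\<^sup>2 * K * (sqrt e * sqrt h)"
proof -
  define d where "d = real CARD('d)"
  define S where "S = sqrt e * sqrt h"
  have d1: "1 \<le> d" unfolding d_def by (simp add: Suc_leI)
  have eh1: "e * h \<le> 1" using e h by (simp add: mult_le_one)
  have eh0: "0 \<le> e * h" using e h by simp
  have ehS: "e * h \<le> S" unfolding S_def
    using sqrt_ge_self[OF e] sqrt_ge_self[OF h] e h by (intro mult_mono) auto
  have S0: "0 \<le> S" unfolding S_def using e h by simp
  have "norm (fst Z) \<le> (\<Sum>i\<in>UNIV. \<bar>fst Z $ i\<bar>)" by (rule norm_le_l1_cart)
  also have "\<dots> \<le> real (card (UNIV::'d set)) * (K*e*h)" by (rule sum_bounded_above) (use z1 in auto)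
  finally have n1: "norm (fst Z) \<le> d * (K * (e*h))" unfolding d_def by (simp add: mult_ac)
  have "d * (K * (e*h)) \<le> d * (K * S)" using ehS d1 K by (intro mult_left_mono) auto
  with n1 have n1': "norm (fst Z) \<le> d * K * S" by (simp add: mult_ac)
  have sq: "4 * sqrt \<bar>(snd Z $ fst p $ snd p - fst Z $ fst p * fst Z $ snd p / 2) / 2\<bar> \<le> 8 * K * S" for p :: "'d \<times> 'd"
  proof -
    have "\<bar>fst Z $ fst p * fst Z $ snd p\<bar> \<le> (K*(e*h)) * (K*(e*h))"
      unfolding abs_mult using z1 K eh0 by (intro mult_mono) (auto simp: mult_ac)
    also have "\<dots> = (K*K) * ((e*h)*(e*h))" by (simp add: mult_ac)
    also have "\<dots> \<le> (K*K) * (e*h)" using eh0 eh1 K by (intro mult_left_mono) (auto simp: mult_le_cancel_left1 mult_left_le)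
    finally have pz: "\<bar>fst Z $ fst p * fst Z $ snd p\<bar> \<le> (K*K) * (e*h)" .
    have sz: "\<bar>snd Z $ fst p $ snd p\<bar> \<le> 4 * ((K*K) * (e*h))" using z2[of "fst p" "snd p"] by (simp add: power2_eq_square mult_ac)
    have "\<bar>(snd Z $ fst p $ snd p - fst Z $ fst p * fst Z $ snd p / 2) / 2\<bar> \<le> 4 * ((K*K) * (e*h))"
      using pz sz by (simp add: abs_le_iff)
    also have "\<dots> = (2*K)\<^sup>2 * (e*h)" by (simp add: power2_eq_square mult_ac)
    finally have "sqrt \<bar>(snd Z $ fst p $ snd p - fst Z $ fst p * fst Z $ snd p / 2) / 2\<bar> \<le> sqrt ((2*K)\<^sup>2 * (e*h))"
      by (rule real_sqrt_le_mono)
    also have "\<dots> = 2 * K * S" unfolding S_def using K by (simp add: real_sqrt_mult)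
    finally show ?thesis by simp
  qed
  have "ccnorm Z \<le> norm (fst Z) + (\<Sum>p\<in>UNIV. 4 * sqrt \<bar>(snd Z $ fst p $ snd p - fst Z $ fst p * fst Z $ snd p / 2) / 2\<bar>)"
    by (rule ccnorm_upper[OF Z])
  also have "(\<Sum>p\<in>UNIV. 4 * sqrt \<bar>(snd Z $ fst p $ snd p - fst Z $ fst p * fst Z $ snd p / 2) / 2\<bar>) \<le> real (card (UNIV :: ('d\<times>'d) set)) * (8 * K * S)"
    by (rule sum_bounded_above) (use sq in auto)
  also have "real (card (UNIV :: ('d\<times>'d) set)) = d\<^sup>2" unfolding d_def
    by (simp only: UNIV_Times_UNIV[symmetric] card_cartesian_product power2_eq_square of_nat_mult)
  finally have "ccnorm Z \<le> d * K * S + d\<^sup>2 * (8 * K * S)" using n1' by linarith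
  also have "\<dots> \<le> 9 * d\<^sup>2 * K * S"
  proof -
    have "d * (K * S) \<le> d\<^sup>2 * (K * S)" using d1 K S0 by (intro mult_right_mono) (auto simp: power2_eq_square)
    then show ?thesis by (simp add: algebra_simps)
  qed
  finally show ?thesis unfolding d_def S_def .
qed



lemma mat_comp_le: "\<bar>A $ i $ j\<bar> \<le> norm (A::real^'n::finite^'m::finite)"
  by (rule order_trans[OF component_le_norm_cart Finite_Cartesian_Product.norm_nth_le])

theorem mainTheorem20:
  fixes \<phi> :: "real \<Rightarrow> real" and p :: real and n :: nat
  assumes "CARD('d::finite) \<ge> 2"
    and "2 < p" and "p < 3"
    and "\<phi> \<in> Xi p"
    and "((\<lambda>x. sqrt x / \<phi> x) \<longlongrightarrow> 0) (at_right 0)"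
  shows "\<forall>x\<in>(C0paths :: (real \<Rightarrow> 'd grp) set). \<forall>\<epsilon>>0. \<exists>\<delta>>0. \<forall>y\<in>C0paths.
           d_inf x y < ereal \<delta> \<longrightarrow> d_phi \<phi> (Ups n x) (Ups n y) < ereal \<epsilon>"
proof (intro ballI allI impI)
  fix x :: "real \<Rightarrow> 'd grp" and \<epsilon> :: real
  assume x: "x \<in> C0paths" and \<epsilon>: "0 < \<epsilon>"
  have p0: "0 < p" using assms(2) by simp
  obtain c where c0: "0 < c" and cphi: "\<And>h. 0 < h \<Longrightarrow> h \<le> 1 \<Longrightarrow> c * sqrt h \<le> \<phi> h"
    using phi_lower[OF assms(4) p0 assms(5)] by blast
  have x0: "x 0 = gone" and xG: "\<And>t. 0 \<le> t \<Longrightarrow> t \<le> 1 \<Longrightarrow> x t \<in> Gset"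
    using x unfolding C0paths_def by auto
  define M where "M = 1 + (\<Sum>k\<le>(2::nat)^n. norm (fst (x (real k / 2^n))) + norm (snd (x (real k / 2^n))))"
  have Msum: "norm (fst (x (real k / 2^n))) + norm (snd (x (real k / 2^n))) \<le> M - 1" if "k \<le> 2^n" for k
    unfolding M_def using that by (auto intro!: member_le_sum)
  have M1: "1 \<le> M"
  proof -
    have a: "norm (fst (x (real 0 / 2^n))) + norm (snd (x (real 0 / 2^n))) \<le> M - 1" by (rule Msum) simp
    have b: "0 \<le> norm (fst (x (real 0 / 2^n))) + norm (snd (x (real 0 / 2^n)))" by (intro add_nonneg_nonneg norm_ge_zero)
    from a b show ?thesis by linarith
  qed
  have Mb1: "\<bar>fst (x (real k / 2^n)) $ i\<bar> \<le> M" if "k \<le> 2^n" for k i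
    using Msum[OF that] component_le_norm_cart[where x="fst (x (real k / 2^n))" and i=i] norm_ge_zero[of "snd (x (real k / 2^n))"]
    by linarith
  have Mb2: "\<bar>snd (x (real k / 2^n)) $ i $ j\<bar> \<le> M" if "k \<le> 2^n" for k i j
  proof -
    have "\<bar>snd (x (real k / 2^n)) $ i $ j\<bar> \<le> norm (snd (x (real k / 2^n)))" by (rule mat_comp_le)
    then show ?thesis using Msum[OF that] norm_ge_zero[of "fst (x (real k / 2^n))"] by linarith
  qed
  define K :: real where "K = 2^n * (22 * M)"
  have K1: "1 \<le> K"
  proof -
    have a: "1 \<le> (2::real)^n" by simp
    have b: "1 \<le> 22 * M" using M1 by simp
    have "1 * 1 \<le> (2::real)^n * (22 * M)" using a b by (intro mult_mono) auto
    then show ?thesis unfolding K_def by simp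
  qed
  define R where "R = 9 * (real CARD('d))\<^sup>2 * K"
  have R0: "0 < R" unfolding R_def using K1 by simp
  define e where "e = min 1 ((\<epsilon> * c / (2 * R))\<^sup>2)"
  have e0: "0 < e" unfolding e_def using \<epsilon> c0 R0 by simp
  have e1: "e \<le> 1" unfolding e_def by simp
  have eR: "R * sqrt e / c \<le> \<epsilon> / 2"
  proof -
    have "sqrt e \<le> sqrt ((\<epsilon> * c / (2 * R))\<^sup>2)" unfolding e_def by (rule real_sqrt_le_mono) simp
    also have "\<dots> = \<epsilon> * c / (2 * R)" using \<epsilon> c0 R0 by simp
    finally have s: "sqrt e \<le> \<epsilon> * c / (2 * R)" .
    have "R * sqrt e \<le> R * (\<epsilon> * c / (2 * R))" by (rule mult_left_mono[OF s]) (use R0 in simp)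
    also have "\<dots> = \<epsilon> / 2 * c" using R0 by (simp add: field_simps)
    finally have "R * sqrt e \<le> \<epsilon> / 2 * c" .
    then show ?thesis using c0 by (simp only: pos_divide_le_eq)
  qed
  define \<delta> where "\<delta> = e / (M + 1)"
  have \<delta>0: "0 < \<delta>" unfolding \<delta>_def using e0 M1 by simp
  have \<delta>1: "\<delta> \<le> 1" unfolding \<delta>_def using e0 e1 M1 by (simp add: divide_le_eq)
  have \<delta>e: "\<delta> * (M + 1) = e" unfolding \<delta>_def using M1 by simp
  show "\<exists>\<delta>>0. \<forall>y\<in>C0paths. d_inf x y < ereal \<delta> \<longrightarrow> d_phi \<phi> (Ups n x) (Ups n y) < ereal \<epsilon>"
  proof (intro exI[of _ \<delta>] conjI ballI impI)
    show "0 < \<delta>" by (rule \<delta>0)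
    fix y :: "real \<Rightarrow> 'd grp" assume y: "y \<in> C0paths" and dxy: "d_inf x y < ereal \<delta>"
    have y0: "y 0 = gone" and yG: "\<And>t. 0 \<le> t \<Longrightarrow> t \<le> 1 \<Longrightarrow> y t \<in> Gset"
      using y unfolding C0paths_def by auto
    have close: "\<bar>fst (y (real k / 2^n)) $ i - fst (x (real k / 2^n)) $ i\<bar> \<le> e \<and>
       (\<forall>j. \<bar>snd (y (real k / 2^n)) $ i $ j - snd (x (real k / 2^n)) $ i $ j\<bar> \<le> e)" if k: "k \<le> 2^n" for k i
    proof (cases "k = 0")
      case True
      then show ?thesis using x0 y0 e0 by simp
    next
      case False
      define t :: real where "t = real k / 2^n"
      have t0: "0 < t" unfolding t_def using False by simp
      have "real k \<le> real ((2::nat)^n)" using k by (simp only: of_nat_le_iff)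
      then have "real k \<le> (2::real)^n" by simp
      then have t1: "t \<le> 1" unfolding t_def by (simp only: divide_le_eq_1_pos zero_less_power zero_less_numeral)
      have mem: "(0, t) \<in> {(s,t). 0 \<le> s \<and> s < t \<and> t \<le> 1}" using t0 t1 by simp
      have "ereal (ccnorm (gmul (ginv (incr x 0 t)) (incr y 0 t))) \<le> d_inf x y"
        unfolding d_inf_def
        using SUP_upper[OF mem, of "\<lambda>st. ereal (ccnorm (gmul (ginv (incr x (fst st) (snd st))) (incr y (fst st) (snd st))))"]
        by simp
      also have "incr x 0 t = x t" unfolding incr_def x0 by simp
      also have "incr y 0 t = y t" unfolding incr_def y0 by simp
      finally have le: "ereal (ccnorm (gmul (ginv (x t)) (y t))) \<le> d_inf x y" .
      have "ereal (ccnorm (gmul (ginv (x t)) (y t))) < ereal \<delta>" using le dxy by (rule order.strict_trans1)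
      then have cn: "ccnorm (gmul (ginv (x t)) (y t)) < \<delta>" by simp
      have hG: "gmul (ginv (x t)) (y t) \<in> Gset" using xG yG t0 t1 by (intro Gset_gmul Gset_ginv) auto
      note sm = ccnorm_small[OF hG cn]
      have f1: "\<bar>fst (y t) $ i - fst (x t) $ i\<bar> < \<delta>" using sm by (simp add: algebra_simps)
      have "\<bar>snd (y t) $ i $ j - snd (x t) $ i $ j\<bar> \<le> e" for j
      proof -
        have "\<bar>snd (y t) $ i $ j - snd (x t) $ i $ j - fst (x t) $ i * (fst (y t) $ j - fst (x t) $ j)\<bar> \<le> \<delta>\<^sup>2"
          using sm[THEN conjunct2, rule_format, of i j] by (simp add: algebra_simps)
        moreover have "\<bar>fst (x t) $ i * (fst (y t) $ j - fst (x t) $ j)\<bar> \<le> M * \<delta>"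
        proof -
          have "\<bar>fst (y t) $ j - fst (x t) $ j\<bar> \<le> \<delta>" using sm by (simp add: algebra_simps less_imp_le)
          then show ?thesis unfolding abs_mult using Mb1[OF k, of i] \<delta>0 unfolding t_def
            by (intro mult_mono) auto
        qed
        moreover have "\<delta>\<^sup>2 \<le> \<delta>" using \<delta>0 \<delta>1 by (simp add: power2_eq_square mult_le_cancel_left1)
        moreover have "\<delta> + M * \<delta> = e" using \<delta>e by (simp add: algebra_simps)
        ultimately show ?thesis by linarith
      qed
      moreover have "\<delta> \<le> e"
      proof -
        have "\<delta> * 1 \<le> \<delta> * (M + 1)" using \<delta>0 M1 by (intro mult_left_mono) auto
        then show ?thesis using \<delta>e by simp
      qed
      ultimately show ?thesis using f1 unfolding t_def by auto
    qed
    define p1 where "p1 i t = fst (Ups n x t) $ i" for i t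
    define q1 where "q1 i t = fst (Ups n y t) $ i" for i t
    define p2 where "p2 i j t = snd (Ups n x t) $ i $ j" for i j t
    define q2 where "q2 i j t = snd (Ups n y t) $ i $ j" for i j t
    have lipP: "\<bar>p1 i t - p1 i s\<bar> \<le> K * \<bar>t - s\<bar>" if "s \<in> {0..1}" "t \<in> {0..1}" for i s t
    proof -
      have "\<bar>(fst (Ups n x t) $ i - fst (Ups n (\<lambda>_. gone) t) $ i) - (fst (Ups n x s) $ i - fst (Ups n (\<lambda>_. gone) s) $ i)\<bar> \<le> 2^n * (22 * M) * \<bar>t - s\<bar>"
      proof (rule Ups_lip1[OF _ that])
        fix k assume k: "k < (2::nat)^n"
        show "\<bar>(fst (x (real (Suc k)/2^n)) $ i - fst ((\<lambda>_. gone) (real (Suc k)/2^n)) $ i) - (fst (x (real k/2^n)) $ i - fst ((\<lambda>_. gone) (real k/2^n)) $ i)\<bar> \<le> 22 * M"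
          using Mb1[of k i] Mb1[of "Suc k" i] k M1 by simp
      qed
      then show ?thesis unfolding p1_def K_def by (simp add: Ups_const)
    qed
    have lipQ: "\<bar>q1 i t - q1 i s\<bar> \<le> K * \<bar>t - s\<bar>" if "s \<in> {0..1}" "t \<in> {0..1}" for i s t
    proof -
      have "\<bar>(fst (Ups n y t) $ i - fst (Ups n (\<lambda>_. gone) t) $ i) - (fst (Ups n y s) $ i - fst (Ups n (\<lambda>_. gone) s) $ i)\<bar> \<le> 2^n * (22 * M) * \<bar>t - s\<bar>"
      proof (rule Ups_lip1[OF _ that])
        fix k assume k: "k < (2::nat)^n"
        show "\<bar>(fst (y (real (Suc k)/2^n)) $ i - fst ((\<lambda>_. gone) (real (Suc k)/2^n)) $ i) - (fst (y (real k/2^n)) $ i - fst ((\<lambda>_. gone) (real k/2^n)) $ i)\<bar> \<le> 22 * M"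
          using Mb1[of k i] Mb1[of "Suc k" i] close[of k i, THEN conjunct1] close[of "Suc k" i, THEN conjunct1] k M1 e1
          by simp
      qed
      then show ?thesis unfolding q1_def K_def by (simp add: Ups_const)
    qed
    have lipD: "\<bar>(q1 i t - p1 i t) - (q1 i s - p1 i s)\<bar> \<le> K * e * \<bar>t - s\<bar>" if "s \<in> {0..1}" "t \<in> {0..1}" for i s t
    proof -
      have "\<bar>(fst (Ups n y t) $ i - fst (Ups n x t) $ i) - (fst (Ups n y s) $ i - fst (Ups n x s) $ i)\<bar> \<le> 2^n * (22 * M * e) * \<bar>t - s\<bar>"
      proof (rule Ups_lip1[OF _ that])
        fix k assume k: "k < (2::nat)^n"
        have "e \<le> M * e" using M1 e0 by simp
        then show "\<bar>(fst (y (real (Suc k)/2^n)) $ i - fst (x (real (Suc k)/2^n)) $ i) - (fst (y (real k/2^n)) $ i - fst (x (real k/2^n)) $ i)\<bar> \<le> 22 * M * e"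
          using close[of k i, THEN conjunct1] close[of "Suc k" i, THEN conjunct1] k by simp
      qed
      then show ?thesis unfolding q1_def p1_def K_def by (simp add: mult_ac)
    qed
    have lipG: "\<bar>(q2 i j t - p2 i j t) - (q2 i j s - p2 i j s)\<bar> \<le> K * e * \<bar>t - s\<bar>" if "s \<in> {0..1}" "t \<in> {0..1}" for i j s t
    proof -
      have "\<bar>(snd (Ups n y t) $ i $ j - snd (Ups n x t) $ i $ j) - (snd (Ups n y s) $ i $ j - snd (Ups n x s) $ i $ j)\<bar> \<le> 2^n * (22 * M * e) * \<bar>t - s\<bar>"
      proof (rule Ups_lip2[OF _ that])
        fix k assume k: "k < (2::nat)^n"
        have k': "k \<le> 2^n" "Suc k \<le> 2^n" using k by auto
        show "\<bar>fst (y (real k/2^n)) $ i * (fst (y (real (Suc k)/2^n)) $ j - fst (y (real k/2^n)) $ j)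
                  - fst (x (real k/2^n)) $ i * (fst (x (real (Suc k)/2^n)) $ j - fst (x (real k/2^n)) $ j)\<bar>
          + 2 * \<bar>(snd (y (real (Suc k)/2^n)) $ i $ j - snd (x (real (Suc k)/2^n)) $ i $ j)
               - (snd (y (real k/2^n)) $ i $ j - snd (x (real k/2^n)) $ i $ j)
               - (fst (y (real k/2^n)) $ i * (fst (y (real (Suc k)/2^n)) $ j - fst (y (real k/2^n)) $ j)
                  - fst (x (real k/2^n)) $ i * (fst (x (real (Suc k)/2^n)) $ j - fst (x (real k/2^n)) $ j))\<bar>
          \<le> 22 * M * e"
        proof (rule coef_bound)
          show "\<bar>fst (x (real k/2^n)) $ i\<bar> \<le> M" by (rule Mb1[OF k'(1)])
          show "\<bar>fst (x (real k/2^n)) $ j\<bar> \<le> M" by (rule Mb1[OF k'(1)])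
          show "\<bar>fst (x (real (Suc k)/2^n)) $ j\<bar> \<le> M" by (rule Mb1[OF k'(2)])
          show "\<bar>fst (y (real k/2^n)) $ i - fst (x (real k/2^n)) $ i\<bar> \<le> e" using close[OF k'(1), of i] by blast
          show "\<bar>fst (y (real k/2^n)) $ j - fst (x (real k/2^n)) $ j\<bar> \<le> e" using close[OF k'(1), of j] by blast
          show "\<bar>fst (y (real (Suc k)/2^n)) $ j - fst (x (real (Suc k)/2^n)) $ j\<bar> \<le> e" using close[OF k'(2), of j] by blast
          show "\<bar>snd (y (real k/2^n)) $ i $ j - snd (x (real k/2^n)) $ i $ j\<bar> \<le> e" using close[OF k'(1), of i] by blast
          show "\<bar>snd (y (real (Suc k)/2^n)) $ i $ j - snd (x (real (Suc k)/2^n)) $ i $ j\<bar> \<le> e" using close[OF k'(2), of i] by blast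
        qed (use M1 e0 e1 in auto)
      qed
      then show ?thesis unfolding q2_def p2_def K_def by (simp add: mult_ac)
    qed
    have P0: "p1 i 0 = 0" and Q0: "q1 i 0 = 0" for i
      unfolding p1_def q1_def using Ups_at0[of x n, OF x0] Ups_at0[of y n, OF y0] by simp_all
    have "d_phi \<phi> (Ups n x) (Ups n y) \<le> ereal (\<epsilon> / 2)"
      unfolding d_phi_def
    proof (rule SUP_least)
      fix st assume "st \<in> {(s,t). 0 \<le> s \<and> s < t \<and> t \<le> (1::real)}"
      then obtain s t where st: "st = (s,t)" "0 \<le> s" "s < t" "t \<le> 1" by auto
      define h where "h = t - s"
      have h0: "0 < h" and h1: "h \<le> 1" unfolding h_def using st by auto
      have S: "s \<in> {0..1}" "t \<in> {0..1}" "0 \<in> {0..(1::real)}" using st by auto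
      have ath: "\<bar>t - s\<bar> = h" unfolding h_def using st by simp
      define Z where "Z = gmul (ginv (incr (Ups n x) s t)) (incr (Ups n y) s t)"
      have ZG: "Z \<in> Gset" unfolding Z_def incr_def using S x y
        by (intro Gset_gmul Gset_ginv Ups_Gset) auto
      have z1: "\<bar>fst Z $ i\<bar> \<le> K*e*h" for i
      proof -
        have "fst Z $ i = (q1 i t - p1 i t) - (q1 i s - p1 i s)"
          unfolding Z_def incr_def p1_def q1_def by simp
        then show ?thesis using lipD[OF S(1,2), of i] ath by simp
      qed
      have z2: "\<bar>snd Z $ i $ j\<bar> \<le> 4*K\<^sup>2*e*h" for i j
      proof -
        have "snd Z $ i $ j = ((q2 i j t - p2 i j t) - (q2 i j s - p2 i j s))
             - ((q1 i s - p1 i s) * (q1 j t - q1 j s) + p1 i s * ((q1 j t - p1 j t) - (q1 j s - p1 j s)))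
             - (p1 i t - p1 i s) * ((q1 j t - p1 j t) - (q1 j s - p1 j s))"
          unfolding Z_def incr_def p1_def q1_def p2_def q2_def by (simp add: algebra_simps)
        also have "\<bar>\<dots>\<bar> \<le> 4*K\<^sup>2*e*h"
        proof (rule Z2_bound)
          show "\<bar>(q2 i j t - p2 i j t) - (q2 i j s - p2 i j s)\<bar> \<le> K*e*h" using lipG[OF S(1,2)] ath by simp
          have "\<bar>(q1 i s - p1 i s) - (q1 i 0 - p1 i 0)\<bar> \<le> K * e * \<bar>s - 0\<bar>" using lipD[OF S(3,1)] .
          moreover have "K * e * \<bar>s - 0\<bar> \<le> K * e" using S K1 e0 by (simp add: mult_le_cancel_left1)
          ultimately show "\<bar>q1 i s - p1 i s\<bar> \<le> K*e" using P0 Q0 by simp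
          show "\<bar>q1 j t - q1 j s\<bar> \<le> K*h" using lipQ[OF S(1,2)] ath by simp
          have "\<bar>p1 i s - p1 i 0\<bar> \<le> K * \<bar>s - 0\<bar>" using lipP[OF S(3,1)] .
          moreover have "K * \<bar>s - 0\<bar> \<le> K" using S K1 by (simp add: mult_le_cancel_left1)
          ultimately show "\<bar>p1 i s\<bar> \<le> K" using P0 by simp
          show "\<bar>(q1 j t - p1 j t) - (q1 j s - p1 j s)\<bar> \<le> K*e*h" using lipD[OF S(1,2)] ath by simp
          show "\<bar>p1 i t - p1 i s\<bar> \<le> K*h" using lipP[OF S(1,2)] ath by simp
        qed (use K1 e0 e1 h0 h1 in auto)
        finally show ?thesis .
      qed
      have cz: "ccnorm Z \<le> R * (sqrt e * sqrt h)"
        unfolding R_def by (rule ccnorm_final[OF ZG z1 z2 K1]) (use e0 e1 h0 h1 in auto)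
      have ph: "c * sqrt h \<le> \<phi> h" using cphi[OF h0 h1] .
      have sh: "0 < sqrt h" using h0 by simp
      have "ccnorm Z / \<phi> h \<le> R * (sqrt e * sqrt h) / \<phi> h"
        using cz ph c0 sh by (intro divide_right_mono) (auto intro: order_trans[of 0 "c * sqrt h"])
      also have "\<dots> \<le> R * (sqrt e * sqrt h) / (c * sqrt h)"
      proof (rule divide_left_mono)
        have cs: "0 < c * sqrt h" using c0 sh by simp
        then have "0 < \<phi> h" using ph by linarith
        then show "0 < \<phi> h * (c * sqrt h)" using cs by simp
      qed (use ph R0 e0 h0 in auto)
      also have "\<dots> = R * sqrt e / c" using sh by (simp add: field_simps)
      also have "\<dots> \<le> \<epsilon> / 2" by (rule eR)
      finally have "ccnorm Z / \<phi> h \<le> \<epsilon> / 2" .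
      then show "ereal (ccnorm (gmul (ginv (incr (Ups n x) (fst st) (snd st))) (incr (Ups n y) (fst st) (snd st))) / \<phi> (snd st - fst st)) \<le> ereal (\<epsilon> / 2)"
        unfolding st Z_def h_def by simp
    qed
    also have "\<dots> < ereal \<epsilon>" using \<epsilon> by simp
    finally show "d_phi \<phi> (Ups n x) (Ups n y) < ereal \<epsilon>" .
  qed
qed


end
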